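(* Let $\mathcal{G}$ be a connected graph on which the SBCM is run, and suppose its node set can be partitioned into sets $I$ and $J$ such that (1) $J\subseteq\mathcal{P}$ (i.e., $J$ contains no zealots), and (2) there is a single node $i\in I$ such that every path from any node $j\in J$ to a zealot traverses $i$. Then at any steady state $\mathbf{x}$ of the SBCM, $x_j=x_i$ for all $j\in J$.
   Context: Let $\mathcal{G}$ be a finite undirected unweighted graph without self-loops, with node set $\mathcal{N}$, adjacency $i\sim j$, partitioned into zealots $\mathcal{Z}$ and persuadable nodes $\mathcal{P}=\mathcal{N}\setminus\mathcal{Z}$. For $\gamma,\delta\ge0$, $w(x_i,x_j)=\frac{1}{1+e^{\gamma(x_i-x_j)^2-\gamma\delta}}$ if $i\sim j$ and $0$ otherwise. The SBCM is $\frac{dx_i}{dt}=f_i(\mathbf{x})=\frac{\sum_j w(x_i,x_j)(x_j-x_i)}{\sum_j w(x_i,x_j)}$ for $i\in\mathcal{P}$ and $\frac{dx_i}{dt}=0$ for $i\in\mathcal{Z}$. A steady state is $\mathbf{x}$ with $f_i(\mathbf{x})=0$ for all $i$. *)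

theory Defs
  imports Complex_Main
begin

definition simple_graph :: "'a set \<Rightarrow> ('a \<Rightarrow> 'a \<Rightarrow> bool) \<Rightarrow> bool" where
  "simple_graph N E \<longleftrightarrow> finite N \<and> (\<forall>u v. E u v \<longrightarrow> u \<in> N \<and> v \<in> N)
     \<and> (\<forall>u v. E u v \<longrightarrow> E v u) \<and> (\<forall>u. \<not> E u u)"

definition is_path :: "'a set \<Rightarrow> ('a \<Rightarrow> 'a \<Rightarrow> bool) \<Rightarrow> 'a \<Rightarrow> 'a \<Rightarrow> 'a list \<Rightarrow> bool" where
  "is_path N E u v p \<longleftrightarrow> p \<noteq> [] \<and> hd p = u \<and> last p = v \<and> set p \<subseteq> N
     \<and> (\<forall>k. k + 1 < length p \<longrightarrow> E (p ! k) (p ! (k + 1)))"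

definition graph_connected :: "'a set \<Rightarrow> ('a \<Rightarrow> 'a \<Rightarrow> bool) \<Rightarrow> bool" where
  "graph_connected N E \<longleftrightarrow> (\<forall>u\<in>N. \<forall>v\<in>N. \<exists>p. is_path N E u v p)"

definition sbcm_w :: "real \<Rightarrow> real \<Rightarrow> real \<Rightarrow> real \<Rightarrow> real" where
  "sbcm_w \<gamma> \<delta> a b = 1 / (1 + exp (\<gamma> * (a - b)^2 - \<gamma> * \<delta>))"

definition sbcm_f :: "'a set \<Rightarrow> ('a \<Rightarrow> 'a \<Rightarrow> bool) \<Rightarrow> 'a set \<Rightarrow> real \<Rightarrow> real \<Rightarrow> ('a \<Rightarrow> real) \<Rightarrow> 'a \<Rightarrow> real" where
  "sbcm_f N E Z \<gamma> \<delta> x i =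
     (if i \<in> Z then 0
      else (\<Sum>j\<in>N. (if E i j then sbcm_w \<gamma> \<delta> (x i) (x j) else 0) * (x j - x i))
           / (\<Sum>j\<in>N. (if E i j then sbcm_w \<gamma> \<delta> (x i) (x j) else 0)))"

definition sbcm_steady_state :: "'a set \<Rightarrow> ('a \<Rightarrow> 'a \<Rightarrow> bool) \<Rightarrow> 'a set \<Rightarrow> real \<Rightarrow> real \<Rightarrow> ('a \<Rightarrow> real) \<Rightarrow> bool" where
  "sbcm_steady_state N E Z \<gamma> \<delta> x \<longleftrightarrow> (\<forall>i\<in>N. sbcm_f N E Z \<gamma> \<delta> x i = 0)"

end

theory Submission
  imports Defs
begin

lemma path_closed:
  assumes "is_path N E u v p" "u \<in> S" "\<forall>a\<in>S. \<forall>b. E a b \<longrightarrow> b \<in> S"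
  shows "v \<in> S"
proof -
  have P: "p \<noteq> []" "hd p = u" "last p = v"
    "\<forall>k. k + 1 < length p \<longrightarrow> E (p ! k) (p ! (k + 1))"
    using assms(1) unfolding is_path_def by auto
  have "\<forall>k. k < length p \<longrightarrow> p ! k \<in> S"
  proof
    fix k show "k < length p \<longrightarrow> p ! k \<in> S"
    proof (induction k)
      case 0 then show ?case using P assms(2) by (simp add: hd_conv_nth)
    next
      case (Suc k) then show ?case using P assms(3) by (metis Suc_eq_plus1 Suc_lessD)
    qed
  qed
  then show ?thesis using P by (metis last_conv_nth length_greater_0_conv diff_less zero_less_one)
qed

lemma path_snoc:
  assumes "is_path N E u c p" "E c v" "v \<in> N"
  shows "is_path N E u v (p @ [v])"
proof -
  have P: "p \<noteq> []" "hd p = u" "last p = c" "set p \<subseteq> N"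
    "\<forall>k. k + 1 < length p \<longrightarrow> E (p ! k) (p ! (k + 1))"
    using assms(1) unfolding is_path_def by auto
  have "\<forall>k. k + 1 < length (p @ [v]) \<longrightarrow> E ((p @ [v]) ! k) ((p @ [v]) ! (k + 1))"
  proof (intro allI impI)
    fix k assume k: "k + 1 < length (p @ [v])"
    show "E ((p @ [v]) ! k) ((p @ [v]) ! (k + 1))"
    proof (cases "k + 1 < length p")
      case True then show ?thesis using P by (simp add: nth_append)
    next
      case False
      then have "k = length p - 1" using k by simp
      then show ?thesis using P assms(2) False k
        by (simp add: nth_append last_conv_nth)
    qed
  qed
  then show ?thesis using P assms unfolding is_path_def by auto
qed

lemma harmonic_le:
  fixes y :: "'a \<Rightarrow> real"
  assumes fin: "finite N" and CN: "C \<subseteq> N" and iC: "i \<notin> C"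
    and closed: "\<forall>c\<in>C. \<forall>v. E c v \<longrightarrow> v \<in> C \<or> v = i"
    and EN: "\<forall>u v. E u v \<longrightarrow> v \<in> N"
    and pth: "\<forall>u\<in>N. \<exists>p. is_path N E u i p"
    and bal: "\<forall>c\<in>C. (\<Sum>v\<in>N. (if E c v then W c v else 0) * (y v - y c)) = 0"
    and Wpos: "\<forall>c v. W c v > 0"
  shows "\<forall>c\<in>C. y c \<le> y i"
proof (rule ccontr)
  assume "\<not> (\<forall>c\<in>C. y c \<le> y i)"
  then obtain c0 where c0: "c0 \<in> C" "y c0 > y i" by auto
  have finC: "finite C" using fin CN finite_subset by blast
  define M where "M = Max (y ` C)"
  have leM: "\<And>c. c \<in> C \<Longrightarrow> y c \<le> M" unfolding M_def using finC by simp
  have "M \<in> y ` C" unfolding M_def using finC c0 by (intro Max_in) auto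
  then obtain s where s: "s \<in> C" "y s = M" by auto
  have Mi: "y i < M" using leM[OF c0(1)] c0 by simp
  define S where "S = {c\<in>C. y c = M}"
  have clo: "\<forall>a\<in>S. \<forall>b. E a b \<longrightarrow> b \<in> S"
  proof (intro ballI allI impI)
    fix a b assume a: "a \<in> S" and ab: "E a b"
    have aC: "a \<in> C" and ya: "y a = M" using a S_def by auto
    have nonpos: "\<forall>v\<in>N. (if E a v then W a v else 0) * (y v - y a) \<le> 0"
    proof
      fix v assume "v \<in> N"
      show "(if E a v then W a v else 0) * (y v - y a) \<le> 0"
      proof (cases "E a v")
        case True
        then have "y v \<le> M" using closed aC leM Mi by fastforce
        then show ?thesis using True Wpos ya by (simp add: mult_nonneg_nonpos less_imp_le)
      qed simp
    qed
    have "(\<Sum>v\<in>N. - ((if E a v then W a v else 0) * (y v - y a))) = 0"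
      using bal aC by (simp add: sum_negf)
    then have "\<forall>v\<in>N. - ((if E a v then W a v else 0) * (y v - y a)) = 0"
      using nonpos fin by (subst (asm) sum_nonneg_eq_0_iff) auto
    then have "(W a b) * (y b - y a) = 0" using ab EN by force
    then have "y b = M" using Wpos[rule_format, of a b] ya by simp
    moreover have "b \<in> C" using closed aC ab Mi \<open>y b = M\<close> by fastforce
    ultimately show "b \<in> S" using S_def by simp
  qed
  obtain p where "is_path N E s i p" using pth s CN by blast
  then have "i \<in> S" using path_closed[OF _ _ clo] s S_def by auto
  then show False using iC S_def by simp
qed

theorem theorem4:
  fixes N :: "'a set" and E :: "'a \<Rightarrow> 'a \<Rightarrow> bool" and Z I J :: "'a set"
    and \<gamma> \<delta> :: real and x :: "'a \<Rightarrow> real" and i :: 'a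
  assumes graph: "simple_graph N E"
    and conn: "graph_connected N E"
    and Z_sub: "Z \<subseteq> N"
    and gamma: "\<gamma> \<ge> 0" and delta: "\<delta> \<ge> 0"
    and part: "I \<union> J = N" "I \<inter> J = {}"
    and J_pers: "J \<subseteq> N - Z"
    and i_in: "i \<in> I"
    and cut: "\<forall>j\<in>J. \<forall>z\<in>Z. \<forall>p. is_path N E j z p \<longrightarrow> i \<in> set p"
    and ss: "sbcm_steady_state N E Z \<gamma> \<delta> x"
  shows "\<forall>j\<in>J. x j = x i"
proof -
  have fin: "finite N" and EN: "\<forall>u v. E u v \<longrightarrow> v \<in> N"
    using graph unfolding simple_graph_def by auto
  have iN: "i \<in> N" using part i_in by auto
  have pth: "\<forall>u\<in>N. \<exists>p. is_path N E u i p" using conn iN unfolding graph_connected_def by auto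
  define C where "C = {v. \<exists>j\<in>J. \<exists>p. is_path N E j v p \<and> i \<notin> set p}"
  have CN: "C \<subseteq> N"
    unfolding C_def is_path_def by (auto dest!: last_in_set)
  have iC: "i \<notin> C" unfolding C_def is_path_def by (auto dest!: last_in_set)
  have JC: "J \<subseteq> C"
  proof
    fix j assume j: "j \<in> J"
    then have "j \<noteq> i" using part i_in by auto
    moreover have "is_path N E j j [j]" using j part unfolding is_path_def by auto
    ultimately show "j \<in> C" unfolding C_def using j by force
  qed
  have CZ: "C \<inter> Z = {}"
  proof (rule ccontr)
    assume "C \<inter> Z \<noteq> {}"
    then obtain v j p where "v \<in> Z" "j \<in> J" "is_path N E j v p" "i \<notin> set p"
      unfolding C_def by auto
    then show False using cut by blast
  qed
  have closed: "\<forall>c\<in>C. \<forall>v. E c v \<longrightarrow> v \<in> C \<or> v = i"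
  proof (intro ballI allI impI)
    fix c v assume c: "c \<in> C" and cv: "E c v"
    show "v \<in> C \<or> v = i"
    proof (cases "v = i")
      case False
      obtain j p where jp: "j \<in> J" "is_path N E j c p" "i \<notin> set p" using c C_def by auto
      have "is_path N E j v (p @ [v])" using path_snoc[OF jp(2) cv] EN cv by blast
      moreover have "i \<notin> set (p @ [v])" using jp False by auto
      ultimately show ?thesis unfolding C_def using jp by blast
    qed simp
  qed
  define W where "W = (\<lambda>c v. sbcm_w \<gamma> \<delta> (x c) (x v))"
  have Wpos: "\<forall>c v. W c v > 0"
    unfolding W_def sbcm_w_def by (simp add: add_pos_pos)
  have bal: "\<forall>c\<in>C. (\<Sum>v\<in>N. (if E c v then W c v else 0) * (x v - x c)) = 0"
  proof
    fix c assume c: "c \<in> C"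
    have cN: "c \<in> N" and cZ: "c \<notin> Z" using c CN CZ by auto
    have f0: "(\<Sum>v\<in>N. (if E c v then W c v else 0) * (x v - x c))
              / (\<Sum>v\<in>N. (if E c v then W c v else 0)) = 0"
      using ss cN cZ unfolding sbcm_steady_state_def sbcm_f_def W_def by auto
    show "(\<Sum>v\<in>N. (if E c v then W c v else 0) * (x v - x c)) = 0"
    proof (cases "(\<Sum>v\<in>N. (if E c v then W c v else 0)) = 0")
      case True
      have "\<forall>v\<in>N. (if E c v then W c v else 0) = 0"
        using True fin Wpos by (subst (asm) sum_nonneg_eq_0_iff) (auto simp: less_imp_le)
      then show ?thesis by simp
    next
      case False then show ?thesis using f0 by simp
    qed
  qed
  have bal2: "\<forall>c\<in>C. (\<Sum>v\<in>N. (if E c v then W c v else 0) * ((\<lambda>u. - x u) v - (\<lambda>u. - x u) c)) = 0"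
  proof
    fix c assume c: "c \<in> C"
    have "(\<Sum>v\<in>N. (if E c v then W c v else 0) * ((\<lambda>u. - x u) v - (\<lambda>u. - x u) c))
        = - (\<Sum>v\<in>N. (if E c v then W c v else 0) * (x v - x c))"
      by (simp add: sum_negf[symmetric] algebra_simps)
    then show "(\<Sum>v\<in>N. (if E c v then W c v else 0) * ((\<lambda>u. - x u) v - (\<lambda>u. - x u) c)) = 0"
      using bal c by simp
  qed
  have le1: "\<forall>c\<in>C. x c \<le> x i"
    using harmonic_le[OF fin CN iC closed EN pth bal Wpos] .
  have le2: "\<forall>c\<in>C. - x c \<le> - x i"
    using harmonic_le[OF fin CN iC closed EN pth bal2 Wpos] by simp
  show ?thesis using le1 le2 JC by force
qed

end
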